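(* Let $a<0$, $b<0$, $c>0$, $d<0$ with $a+bd>0$, consider $$Z_0=\begin{cases}X=(a,0,b(y+x^2)) & z\ge0,\\ Y=(c,d,x)& z\le0,\end{cases}$$ let $\Sigma^{c+}=\{(x,y,0)\,:\,x>0,\ y<-x^2\}$, $\Sigma^s=\{(x,y,0)\,:\,x>0,\ y>-x^2\}$, and let $\varphi$ be the first return map $$\varphi(x,y)=\left(\frac{ax-\sqrt{-3a^2(x^2+4y)}}{2a},\ y+\frac{d\big(ax-\sqrt{-3a^2(x^2+4y)}\big)}{ac}\right).$$ Given $p_0=(x_0,y_0,0)\in\overline{\Sigma^{c+}}\setminus\{0\}$, let $p_1=(x_1,y_1,0)=\varphi(p_0)$ and $p_n=(x_n,y_n,0)=\varphi^n(p_0)$ whenever defined (the map being iterated only while the iterates remain in $\overline{\Sigma^{c+}}$). Then $x_1>x_0$, and if $p_n$ is defined for all $n$ then $x_n\to\infty$ as $n\to\infty$.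
   Context: $\Sigma=\{z=0\}$. The first return map $\varphi$ sends a point $p$ of $\Sigma$ to the point obtained by following the trajectory of $X$ from $p$ until it returns to $\Sigma$, and then following the trajectory of $Y$ from there until it returns to $\Sigma$; it is not iterated on points of $\overline{\Sigma^s}$. For $x\ge0$, $y\le -x^2$ the formula gives $x_1=\frac{x_0+\sqrt{3}\sqrt{-(x_0^2+4y_0)}}{2}$. *)

theory Defs
  imports "HOL-Analysis.Analysis"
begin

(* Points (x,y,0) of Sigma = {z=0} are identified with pairs (x,y) :: real \<times> real. *)

definition Sigma_cplus :: "(real \<times> real) set" where
  "Sigma_cplus = {(x, y). x > 0 \<and> y < - (x^2)}"

definition Sigma_s :: "(real \<times> real) set" where
  "Sigma_s = {(x, y). x > 0 \<and> y > - (x^2)}"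

definition first_return :: "real \<Rightarrow> real \<Rightarrow> real \<Rightarrow> real \<times> real \<Rightarrow> real \<times> real" where
  "first_return a c d p = (case p of (x, y) \<Rightarrow>
     ((a * x - sqrt (- 3 * a^2 * (x^2 + 4 * y))) / (2 * a),
      y + d * (a * x - sqrt (- 3 * a^2 * (x^2 + 4 * y))) / (a * c)))"

end

theory Submission
  imports Defs
begin

lemma closure_sub: "closure Sigma_cplus \<subseteq> {p. 0 \<le> fst p \<and> snd p \<le> - ((fst p)^2) }"
proof (rule closure_minimal)
  show "Sigma_cplus \<subseteq> {p. 0 \<le> fst p \<and> snd p \<le> - ((fst p)^2) }"
    by (auto simp: Sigma_cplus_def)
  show "closed {p::real\<times>real. 0 \<le> fst p \<and> snd p \<le> - ((fst p)^2) }"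
    by (intro closed_Collect_conj closed_Collect_le continuous_intros)
qed

lemma step:
  fixes a c d x y :: real
  assumes "a < 0" "0 \<le> x" "y \<le> - (x^2)" "(x,y) \<noteq> (0,0)"
  shows "fst (first_return a c d (x,y)) \<ge> 2 * x \<and> fst (first_return a c d (x,y)) > 0"
proof -
  define s where "s = sqrt (-3 * (x^2 + 4*y))"
  have y: "y < 0" using assms by (cases "x = 0") (auto simp: power2_eq_square, smt (verit) mult_pos_pos)
  have sq: "sqrt (- 3 * a^2 * (x^2 + 4 * y)) = - a * s"
  proof -
    have "sqrt (- 3 * a^2 * (x^2 + 4 * y)) = sqrt (a^2) * s"
      unfolding s_def by (metis mult.commute mult.left_commute mult_minus_left real_sqrt_mult)
    then show ?thesis using assms(1) by simp
  qed
  have f0: "fst (first_return a c d (x,y)) = (a * x - (- a * s)) / (2 * a)"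
    by (simp only: first_return_def case_prod_conv fst_conv sq)
  have f: "fst (first_return a c d (x,y)) = (x + s) / 2"
    unfolding f0 using assms(1) by (simp add: field_simps)
  have "9 * x^2 \<le> -3 * (x^2 + 4*y)" using assms(3) by simp
  hence "sqrt (9 * x^2) \<le> s" unfolding s_def using real_sqrt_le_mono by blast
  moreover have "sqrt (9 * x^2) = 3 * x" using assms(2) by (simp add: real_sqrt_mult)
  ultimately have s3: "s \<ge> 3 * x" by simp
  have "s > 0" unfolding s_def using assms(3) y by (smt (verit) real_sqrt_gt_zero zero_le_power2)
  then show ?thesis using f s3 assms(2) by auto
qed

theorem mainTheorem6:
  fixes a b c d :: real and p0 :: "real \<times> real"
  assumes "a < 0" "b < 0" "c > 0" "d < 0" "a + b * d > 0"
    and "p0 \<in> closure Sigma_cplus - {(0, 0)}"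
  shows "fst (first_return a c d p0) > fst p0 \<and>
         ((\<forall>n. (first_return a c d ^^ n) p0 \<in> closure Sigma_cplus) \<longrightarrow>
           filterlim (\<lambda>n. fst ((first_return a c d ^^ n) p0)) at_top sequentially)"
proof -
  let ?F = "first_return a c d"
  have gen: "fst (?F p) \<ge> 2 * fst p \<and> fst (?F p) > 0"
    if "p \<in> closure Sigma_cplus" "p \<noteq> (0,0)" for p
  proof -
    obtain x y where p: "p = (x,y)" by fastforce
    have "0 \<le> x" "y \<le> - (x^2)" using that(1) closure_sub p by auto
    then show ?thesis using step[OF assms(1)] that(2) p by simp
  qed
  have first: "fst (?F p0) \<ge> 2 * fst p0 \<and> fst (?F p0) > 0" using gen assms(6) by auto
  have part1: "fst (?F p0) > fst p0" using first by linarith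
  have part2: "filterlim (\<lambda>n. fst ((?F ^^ n) p0)) at_top sequentially"
    if all: "\<forall>n. (?F ^^ n) p0 \<in> closure Sigma_cplus"
  proof -
    define x where "x n = fst ((?F ^^ n) p0)" for n
    have st: "x (Suc n) \<ge> 2 * x n \<and> x (Suc n) > 0" for n
    proof (induction n)
      case 0 then show ?case using first by (simp add: x_def)
    next
      case (Suc m)
      hence "(?F ^^ Suc m) p0 \<noteq> (0,0)" by (auto simp: x_def)
      moreover have "(?F ^^ Suc m) p0 \<in> closure Sigma_cplus" using all by blast
      ultimately have "fst (?F ((?F ^^ Suc m) p0)) \<ge> 2 * fst ((?F ^^ Suc m) p0) \<and> fst (?F ((?F ^^ Suc m) p0)) > 0"
        using gen by blast
      moreover have "(?F ^^ Suc (Suc m)) p0 = ?F ((?F ^^ Suc m) p0)" by (simp only: funpow.simps comp_apply)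
      ultimately show ?case unfolding x_def by simp
    qed
    have x1: "x 1 > 0" using st[of 0] by simp
    have lin: "x (Suc n) \<ge> x 1 * real (Suc n)" for n
    proof (induction n)
      case 0 then show ?case by simp
    next
      case (Suc n)
      have "x (Suc (Suc n)) \<ge> 2 * x (Suc n)" using st by blast
      moreover have "x 1 * real (Suc n) \<ge> x 1" using x1 by simp
      ultimately show ?case using Suc by (simp add: algebra_simps)
    qed
    have lim: "filterlim (\<lambda>n. x 1 * real n) at_top sequentially"
      by (rule filterlim_tendsto_pos_mult_at_top[OF tendsto_const x1 filterlim_real_sequentially])
    have ev: "eventually (\<lambda>n. x 1 * real n \<le> x n) sequentially"
    proof (rule eventually_sequentiallyI[of 1])
      fix n :: nat assume "1 \<le> n"
      then obtain m where "n = Suc m" by (cases n) auto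
      then show "x 1 * real n \<le> x n" using lin by simp
    qed
    have "filterlim x at_top sequentially"
      by (rule filterlim_at_top_mono[OF lim ev])
    then show ?thesis unfolding x_def .
  qed
  show ?thesis using part1 part2 by blast
qed

end
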